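(* Let $\mathsf{PAULI}_n$ be the class of all $n$-qubit Pauli channels and let $\varepsilon<1/2$. Any online learner for $\mathsf{PAULI}_n$ makes $\Omega(n)$ many $\varepsilon$-mistakes against a worst-case adversary. This remains true even if the adversary is forced to decide on a Pauli channel before the interaction with the learner.
   Context: An $n$-qubit Pauli channel is $\mathcal{P}(\rho)=\sum_{\vec z,\vec x\in\{0,1\}^n}p_{\vec z,\vec x}P^{\vec z,\vec x}\rho P^{\vec z,\vec x\dagger}$ for a probability vector $(p_{\vec z,\vec x})$, where $P^{\vec z,\vec x}=\mathrm{i}^{\vec z\cdot\vec x}Z^{\vec z}X^{\vec x}$. Online learning a class $\mathsf{C}$: in each round the adversary presents a channel test operator $E_{A,B}$ ($E_{A,B}\geq0$ on two $n$-qubit systems with $E_{A,B}\leq\sigma_A\otimes\mathbb{1}_B$ for some density operator $\sigma_A$), the learner predicts a value in $[0,1]$ based on past information, and the adversary reveals the true value $\mathrm{Tr}[E_{A,B}C^{\mathcal{N}}_{A,B}]$ for the target $\mathcal{N}\in\mathsf{C}$, with $C^{\mathcal{N}}_{A,B}=\sum_{i,j}|i\rangle\langle j|\otimes\mathcal{N}(|i\rangle\langle j|)$. An $\varepsilon$-mistake is a round where the prediction differs from the true value by more than $\varepsilon$. *)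

theory Defs
  imports Complex_Main
begin

text \<open>Matrices on a d-dimensional space are represented as functions nat \<Rightarrow> nat \<Rightarrow> complex;
  only entries with indices below d are meaningful. Computational basis states of n qubits
  are indexed by k < 2^n, the i-th bit of k being the i-th qubit.\<close>

type_synonym cmat = "nat \<Rightarrow> nat \<Rightarrow> complex"

definition qdim :: "nat \<Rightarrow> nat" where "qdim n = 2 ^ n"

definition bdot :: "nat \<Rightarrow> nat \<Rightarrow> nat \<Rightarrow> nat" where
  "bdot n z a = card {i. i < n \<and> bit z i \<and> bit a i}"

text \<open>P^{z,x} = i^{z.x} Z^z X^x, with X^x |c> = |c xor x>, Z^z |r> = (-1)^{z.r} |r>.\<close>
definition pauli :: "nat \<Rightarrow> nat \<Rightarrow> nat \<Rightarrow> cmat" where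
  "pauli n z x = (\<lambda>r c. if r = xor c x then \<i> ^ bdot n z x * (-1) ^ bdot n z r else 0)"

definition mmult :: "nat \<Rightarrow> cmat \<Rightarrow> cmat \<Rightarrow> cmat" where
  "mmult d A B = (\<lambda>i j. \<Sum>k<d. A i k * B k j)"

definition adj :: "cmat \<Rightarrow> cmat" where
  "adj A = (\<lambda>i j. cnj (A j i))"

definition is_pauli_prob :: "nat \<Rightarrow> (nat \<Rightarrow> nat \<Rightarrow> real) \<Rightarrow> bool" where
  "is_pauli_prob n p \<longleftrightarrow> (\<forall>z x. 0 \<le> p z x) \<and> (\<Sum>z<qdim n. \<Sum>x<qdim n. p z x) = 1"

definition pauli_channel :: "nat \<Rightarrow> (nat \<Rightarrow> nat \<Rightarrow> real) \<Rightarrow> cmat \<Rightarrow> cmat" where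
  "pauli_channel n p \<rho> = (\<lambda>i j. \<Sum>z<qdim n. \<Sum>x<qdim n.
      complex_of_real (p z x) *
      mmult (qdim n) (mmult (qdim n) (pauli n z x) \<rho>) (adj (pauli n z x)) i j)"

definition PAULI :: "nat \<Rightarrow> (cmat \<Rightarrow> cmat) set" where
  "PAULI n = {pauli_channel n p | p. is_pauli_prob n p}"

definition ketbra :: "nat \<Rightarrow> nat \<Rightarrow> cmat" where
  "ketbra i j = (\<lambda>a b. if a = i \<and> b = j then 1 else 0)"

text \<open>Choi operator C_{A,B} = sum_{i,j} |i><j| \<otimes> N(|i><j|); index of |a>_A|b>_B is a*d+b.\<close>
definition choi :: "nat \<Rightarrow> (cmat \<Rightarrow> cmat) \<Rightarrow> cmat" where
  "choi n N = (\<lambda>r c. N (ketbra (r div qdim n) (c div qdim n)) (r mod qdim n) (c mod qdim n))"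

definition psd :: "nat \<Rightarrow> cmat \<Rightarrow> bool" where
  "psd d A \<longleftrightarrow> (\<forall>v :: nat \<Rightarrow> complex.
      Im (\<Sum>i<d. \<Sum>j<d. cnj (v i) * A i j * v j) = 0 \<and>
      0 \<le> Re (\<Sum>i<d. \<Sum>j<d. cnj (v i) * A i j * v j))"

definition mtrace :: "nat \<Rightarrow> cmat \<Rightarrow> complex" where
  "mtrace d A = (\<Sum>i<d. A i i)"

definition density :: "nat \<Rightarrow> cmat \<Rightarrow> bool" where
  "density d \<sigma> \<longleftrightarrow> psd d \<sigma> \<and> mtrace d \<sigma> = 1"

definition tensor_id :: "nat \<Rightarrow> cmat \<Rightarrow> cmat" where
  "tensor_id n \<sigma> = (\<lambda>r c. \<sigma> (r div qdim n) (c div qdim n) *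
      (if r mod qdim n = c mod qdim n then 1 else 0))"

definition channel_test :: "nat \<Rightarrow> cmat \<Rightarrow> bool" where
  "channel_test n E \<longleftrightarrow> psd (qdim n * qdim n) E \<and>
     (\<exists>\<sigma>. density (qdim n) \<sigma> \<and>
          psd (qdim n * qdim n) (\<lambda>r c. tensor_id n \<sigma> r c - E r c))"

text \<open>True value Tr[E C^N] (real for a channel test operator and a CPTP map).\<close>
definition test_value :: "nat \<Rightarrow> cmat \<Rightarrow> (cmat \<Rightarrow> cmat) \<Rightarrow> real" where
  "test_value n E N = Re (mtrace (qdim n * qdim n) (mmult (qdim n * qdim n) E (choi n N)))"

text \<open>A (deterministic) online learner maps the history of (test operator, revealed value)
  pairs and the current test operator to a prediction.\<close>
type_synonym learner = "(cmat \<times> real) list \<Rightarrow> cmat \<Rightarrow> real"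

definition valid_learner :: "learner \<Rightarrow> bool" where
  "valid_learner L \<longleftrightarrow> (\<forall>h E. 0 \<le> L h E \<and> L h E \<le> 1)"

fun mistakes :: "real \<Rightarrow> nat \<Rightarrow> learner \<Rightarrow> (cmat \<Rightarrow> cmat) \<Rightarrow> cmat list \<Rightarrow> (cmat \<times> real) list \<Rightarrow> nat" where
  "mistakes \<epsilon> n L N [] h = 0"
| "mistakes \<epsilon> n L N (E # Es) h =
     (if \<bar>L h E - test_value n E N\<bar> > \<epsilon> then 1 else 0)
     + mistakes \<epsilon> n L N Es (h @ [(E, test_value n E N)])"

end

theory Submission
  imports Defs
begin

lemma qdim_pos: "0 < qdim n" by (simp add: qdim_def)

lemma psd_diag:
  assumes "\<And>i j. A i j = (if i = j then complex_of_real (f i) else 0)" and "\<And>i. 0 \<le> f i"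
  shows "psd d A"
proof -
  have eq: "(\<Sum>i<d. \<Sum>j<d. cnj (v i) * A i j * v j) = complex_of_real (\<Sum>i<d. f i * (cmod (v i))^2)" for v
  proof -
    have "(\<Sum>i<d. \<Sum>j<d. cnj (v i) * A i j * v j) = (\<Sum>i<d. cnj (v i) * complex_of_real (f i) * v i)"
      by (rule sum.cong, simp, simp add: assms(1) if_distrib if_distribR sum.delta cong: if_cong)
    also have "\<dots> = (\<Sum>i<d. complex_of_real (f i * (cmod (v i))^2))"
      by (rule sum.cong, simp, simp only: of_real_mult complex_norm_square, simp add: mult_ac)
    finally show ?thesis by simp
  qed
  show ?thesis unfolding psd_def eq using assms(2) by (simp add: sum_nonneg)
qed

fun num :: "bool list \<Rightarrow> nat" where
  "num [] = 0"
| "num (b # bs) = of_bool b + 2 * num bs"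

lemma num_less: "num bs < 2 ^ length bs"
  by (induction bs) auto

lemma bit_num: "bit (num bs) i = (i < length bs \<and> bs ! i)"
proof (induction bs arbitrary: i)
  case Nil then show ?case by simp
next
  case (Cons b bs)
  show ?case
  proof (cases i)
    case 0 then show ?thesis by (simp add: bit_0)
  next
    case (Suc k)
    have "bit (of_bool b + 2 * num bs) (Suc k) = bit (num bs) k"
      by (simp add: bit_Suc)
    then show ?thesis using Cons Suc by simp
  qed
qed

definition Etest :: "nat \<Rightarrow> nat \<Rightarrow> cmat" where
  "Etest n i = (\<lambda>r c. if r = c \<and> r < qdim n \<and> bit r i then 1 else 0)"

definition pdelta :: "nat \<Rightarrow> nat \<Rightarrow> nat \<Rightarrow> real" where
  "pdelta x = (\<lambda>z x'. if z = 0 \<and> x' = x then 1 else 0)"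

lemma Etest_channel: "channel_test n (Etest n i)"
proof -
  have d: "0 < qdim n" by (rule qdim_pos)
  have p1: "psd (qdim n * qdim n) (Etest n i)"
    by (rule psd_diag[where f="\<lambda>r. if r < qdim n \<and> bit r i then 1 else 0"]) (auto simp: Etest_def)
  have dens: "density (qdim n) (ketbra 0 0)"
    unfolding density_def mtrace_def
    using d by (auto intro!: psd_diag[where f="\<lambda>r. if r = 0 then 1 else 0"] simp: ketbra_def)
  have p2: "psd (qdim n * qdim n) (\<lambda>r c. tensor_id n (ketbra 0 0) r c - Etest n i r c)"
  proof (rule psd_diag[where f="\<lambda>r. if r < qdim n \<and> \<not> bit r i then 1 else 0"])
    fix r c
    show "tensor_id n (ketbra 0 0) r c - Etest n i r c =
      (if r = c then complex_of_real (if r < qdim n \<and> \<not> bit r i then 1 else 0) else 0)"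
      using d by (auto simp: tensor_id_def ketbra_def Etest_def div_eq_0_iff)
  qed simp
  show ?thesis unfolding channel_test_def using p1 p2 dens by blast
qed

lemma pauli_prob: "x < qdim n \<Longrightarrow> is_pauli_prob n (pdelta x)"
proof -
  assume x: "x < qdim n"
  have "(\<Sum>z<qdim n. \<Sum>x'<qdim n. pdelta x z x') = (\<Sum>z<qdim n. if z = 0 then 1 else 0)"
    by (rule sum.cong, simp, simp add: pdelta_def x)
  also have "\<dots> = 1" using qdim_pos[of n] by simp
  finally show ?thesis unfolding is_pauli_prob_def by (simp add: pdelta_def)
qed

lemma bdot0: "bdot n 0 a = 0" by (simp add: bdot_def)

lemma sum_delta_mult:
  fixes f :: "nat \<Rightarrow> 'a::semiring_1"
  assumes "a < d" shows "(\<Sum>l<d. f l * (if l = a then 1 else 0)) = f a"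
proof -
  have "(\<Sum>l<d. f l * (if l = a then 1 else 0)) = (\<Sum>l<d. if l = a then f a else 0)"
    by (rule sum.cong) auto
  also have "\<dots> = f a" using assms by (subst sum.delta) auto
  finally show ?thesis .
qed

lemma sum2_delta:
  fixes a :: "'a::comm_monoid_add" and x d :: nat
  assumes "x < d" "0 < d"
  shows "(\<Sum>z<d. \<Sum>x'<d. if z = 0 \<and> x' = x then a else 0) = a"
proof -
  have "(\<Sum>z<d. \<Sum>x'<d. if z = 0 \<and> x' = x then a else 0) = (\<Sum>z<d. if z = 0 then a else 0)"
  proof (rule sum.cong)
    fix z assume "z \<in> {..<d}"
    show "(\<Sum>x'<d. if z = 0 \<and> x' = x then a else 0) = (if z = 0 then a else 0)"
    proof (cases "z = 0")
    case True
    then show ?thesis using assms by simp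
  next
    case False
    then show ?thesis by simp
  qed
  qed simp
  also have "\<dots> = a" using assms by simp
  finally show ?thesis .
qed

lemma chan_val:
  assumes x: "x < qdim n" and r: "r < qdim n"
  shows "pauli_channel n (pdelta x) (ketbra 0 0) r r = (if r = x then 1 else 0)"
proof -
  have d: "0 < qdim n" by (rule qdim_pos)
  let ?P = "pauli n 0 x"
  have "pauli_channel n (pdelta x) (ketbra 0 0) r r =
     mmult (qdim n) (mmult (qdim n) ?P (ketbra 0 0)) (adj ?P) r r"
    unfolding pauli_channel_def pdelta_def using sum2_delta[OF x d]
    by (simp add: if_distrib if_distribR cong: if_cong)
  also have "\<dots> = ?P r 0 * cnj (?P r 0)"
  proof -
    have inner: "mmult (qdim n) ?P (ketbra 0 0) r k = (if k = 0 then ?P r 0 else 0)" for k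
    proof (cases "k = 0")
      case True
      then show ?thesis unfolding mmult_def ketbra_def using sum_delta_mult[OF d, of "?P r"] by simp
    next
      case False
      then show ?thesis unfolding mmult_def ketbra_def by simp
    qed
    have "mmult (qdim n) (mmult (qdim n) ?P (ketbra 0 0)) (adj ?P) r r
       = (\<Sum>k<qdim n. if k = 0 then ?P r 0 * cnj (?P r 0) else 0)"
      unfolding mmult_def[of _ "mmult _ _ _"] adj_def inner
      by (rule sum.cong) auto
    also have "\<dots> = ?P r 0 * cnj (?P r 0)" using d by (subst sum.delta) auto
    finally show ?thesis .
  qed
  also have "\<dots> = (if r = x then 1 else 0)"
    by (simp add: pauli_def bdot0)
  finally show ?thesis .
qed

lemma test_val:
  assumes x: "x < qdim n"
  shows "test_value n (Etest n i) (pauli_channel n (pdelta x)) = (if bit x i then 1 else 0)"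
proof -
  have d: "0 < qdim n" by (rule qdim_pos)
  let ?N = "pauli_channel n (pdelta x)"
  have "mtrace (qdim n * qdim n) (mmult (qdim n * qdim n) (Etest n i) (choi n ?N))
     = (\<Sum>r<qdim n * qdim n. if r < qdim n \<and> bit r i then choi n ?N r r else 0)"
    unfolding mtrace_def mmult_def
  proof (rule sum.cong)
    fix r assume r: "r \<in> {..<qdim n * qdim n}"
    have "(\<Sum>k<qdim n * qdim n. Etest n i r k * choi n ?N k r) =
       (\<Sum>k<qdim n * qdim n. if k = r then (if r < qdim n \<and> bit r i then choi n ?N r r else 0) else 0)"
      by (rule sum.cong) (auto simp: Etest_def)
    also have "\<dots> = (if r < qdim n \<and> bit r i then choi n ?N r r else 0)"
      using r by (subst sum.delta) simp_all
    finally show "(\<Sum>k<qdim n * qdim n. Etest n i r k * choi n ?N k r) =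
       (if r < qdim n \<and> bit r i then choi n ?N r r else 0)" .
  qed simp
  also have "\<dots> = (\<Sum>r<qdim n * qdim n. if r < qdim n \<and> bit r i then (if r = x then 1 else 0) else 0)"
  proof (rule sum.cong)
    fix r assume "r \<in> {..<qdim n * qdim n}"
    show "(if r < qdim n \<and> bit r i then choi n ?N r r else 0) =
      (if r < qdim n \<and> bit r i then (if r = x then 1 else 0) else 0)"
      using chan_val[OF x, of r] by (auto simp: choi_def)
  qed simp
  also have "\<dots> = (\<Sum>r<qdim n * qdim n. if r = x then (if bit x i then 1 else 0) else 0)"
  proof (rule sum.cong)
    fix r assume "r \<in> {..<qdim n * qdim n}"
    show "(if r < qdim n \<and> bit r i then (if r = x then 1 else 0) else 0) =
      (if r = x then (if bit x i then 1 else 0) else (0::complex))"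
      using x by (cases "r = x") simp_all
  qed simp
  also have "\<dots> = (if bit x i then 1 else 0)"
  proof -
    have "qdim n * 1 \<le> qdim n * qdim n" using d by (intro mult_le_mono2) (simp add: Suc_le_eq)
    then have "x < qdim n * qdim n" using x by linarith
    then show ?thesis by (simp add: sum.delta)
  qed
  finally show ?thesis unfolding test_value_def by simp
qed

theorem corollary4p6:
  fixes \<epsilon> :: real
  assumes "\<epsilon> < 1/2"
  shows "\<exists>c>0. \<exists>n0. \<forall>n\<ge>n0. \<forall>L. valid_learner L \<longrightarrow>
           (\<exists>N\<in>PAULI n. \<exists>Es. (\<forall>E\<in>set Es. channel_test n E) \<and>
               c * real n \<le> real (mistakes \<epsilon> n L N Es []))"
proof (intro exI[of _ 1] conjI allI impI)
  fix n :: nat and L :: learner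
  define hs :: "nat \<Rightarrow> (cmat \<times> real) list" where
    "hs = rec_nat [] (\<lambda>k h. h @ [(Etest n k, if L h (Etest n k) < 1/2 then 1 else 0)])"
  have hs0: "hs 0 = []" by (simp add: hs_def)
  have hsS: "hs (Suc k) = hs k @ [(Etest n k, if L (hs k) (Etest n k) < 1/2 then 1 else 0)]" for k
    by (simp add: hs_def)
  define b where "b k = (L (hs k) (Etest n k) < 1/2)" for k
  define x where "x = num (map b [0..<n])"
  have x: "x < qdim n" unfolding x_def qdim_def using num_less[of "map b [0..<n]"] by simp
  have bx: "k < n \<Longrightarrow> bit x k = b k" for k unfolding x_def bit_num by simp
  define N where "N = pauli_channel n (pdelta x)"
  have NP: "N \<in> PAULI n" unfolding N_def PAULI_def using pauli_prob[OF x] by blast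
  have tv: "k < n \<Longrightarrow> test_value n (Etest n k) N = (if b k then 1 else 0)" for k
    unfolding N_def using test_val[OF x] bx by simp
  have main: "\<And>k. k \<le> n \<Longrightarrow> mistakes \<epsilon> n L N (map (Etest n) [k..<n]) (hs k) = n - k"
  proof -
    fix k assume "k \<le> n"
    then show "mistakes \<epsilon> n L N (map (Etest n) [k..<n]) (hs k) = n - k"
    proof (induction "n - k" arbitrary: k)
      case 0 then show ?case by simp
    next
      case (Suc m)
      then have kn: "k < n" by simp
      have ih: "mistakes \<epsilon> n L N (map (Etest n) [Suc k..<n]) (hs (Suc k)) = n - Suc k"
        using Suc by simp
      have lst: "[k..<n] = k # [Suc k..<n]" using kn by (simp add: upt_conv_Cons)
      have mis: "\<bar>L (hs k) (Etest n k) - test_value n (Etest n k) N\<bar> > \<epsilon>"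
        using tv[OF kn] assms unfolding b_def by (auto split: if_splits)
      have hh: "hs k @ [(Etest n k, test_value n (Etest n k) N)] = hs (Suc k)"
        using tv[OF kn] by (simp add: hsS b_def)
      show ?case unfolding lst using mis ih kn by (simp add: hh)
    qed
  qed
  show "\<exists>N\<in>PAULI n. \<exists>Es. (\<forall>E\<in>set Es. channel_test n E) \<and>
               1 * real n \<le> real (mistakes \<epsilon> n L N Es [])"
    using NP main[of 0] Etest_channel hs0
    by (intro bexI[of _ N] exI[of _ "map (Etest n) [0..<n]"]) auto
qed simp

end
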